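(* Consider the rendezvous game on a connected graph $G$ against Divider with exactly one agent $D_1$. Suppose that at some moment when it is Facilitator's turn to move, $R$ and $J$ occupy vertices of a cycle $C$ of $G$ that has a shortcut. Then Facilitator has a strategy such that after at most $\ell(C)$ of his moves, $R$ and $J$ occupy vertices of a cycle $C'$ of $G$ with $\ell(C')<\ell(C)$.
   Context: Rendezvous game with adversaries. Let $G$ be a finite, simple, undirected, connected graph, let $s,t\in V(G)$ and let $k\ge 1$ be an integer. Two players play: Facilitator, who controls two agents $R$ and $J$ initially placed on $s$ and $t$ respectively, and Divider, who controls $k$ agents $D_1,\dots,D_k$ which Divider initially places on vertices of $V(G)\setminus\{s,t\}$ of his choice (several agents may share a vertex). After the initial placement the players alternate moves, Facilitator moving first. In a move, the player moves each of his agents to an adjacent vertex or leaves it where it is; no agent may be moved to a vertex currently occupied by an agent of the opponent. Both players have full information. Facilitator wins if at some moment $R$ and $J$ occupy the same vertex; Divider wins if this never happens. $\ell(P)$, $\ell(C)$ denote the number of edges of a path $P$ or cycle $C$. For a cycle $C$ of $G$ and distinct $u,v\in V(C)$, let $P_1,P_2$ be the two internally vertex-disjoint $(u,v)$-paths contained in $C$. $C$ has a $(u,v)$-shortcut if there is a $(u,v)$-path $P$ in $G-(V(C)\setminus\{u,v\})$ with $\ell(P)<\ell(P_1)$ and $\ell(P)<\ell(P_2)$; $C$ has a shortcut if it has a $(u,v)$-shortcut for some distinct $u,v\in V(C)$. *)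

theory Defs
  imports Main
begin

definition simple_graph :: "'a set \<Rightarrow> ('a \<Rightarrow> 'a \<Rightarrow> bool) \<Rightarrow> bool" where
  "simple_graph V E \<longleftrightarrow> finite V \<and> (\<forall>x y. E x y \<longrightarrow> x \<in> V \<and> y \<in> V)
     \<and> (\<forall>x y. E x y \<longrightarrow> E y x) \<and> (\<forall>x. \<not> E x x)"

definition connected_graph :: "'a set \<Rightarrow> ('a \<Rightarrow> 'a \<Rightarrow> bool) \<Rightarrow> bool" where
  "connected_graph V E \<longleftrightarrow> V \<noteq> {} \<and> (\<forall>x\<in>V. \<forall>y\<in>V. E\<^sup>*\<^sup>* x y)"

text \<open>A path is a nonempty list of distinct vertices, consecutive ones adjacent.
  Its length (number of edges) is length P - 1.\<close>
definition is_path :: "'a set \<Rightarrow> ('a \<Rightarrow> 'a \<Rightarrow> bool) \<Rightarrow> 'a list \<Rightarrow> bool" where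
  "is_path V E P \<longleftrightarrow> P \<noteq> [] \<and> distinct P \<and> set P \<subseteq> V
     \<and> (\<forall>i. Suc i < length P \<longrightarrow> E (P ! i) (P ! Suc i))"

text \<open>A cycle is a list of at least 3 distinct vertices, consecutive ones adjacent
  and the last adjacent to the first. Its length (number of edges) is length C.\<close>
definition is_cycle :: "'a set \<Rightarrow> ('a \<Rightarrow> 'a \<Rightarrow> bool) \<Rightarrow> 'a list \<Rightarrow> bool" where
  "is_cycle V E C \<longleftrightarrow> length C \<ge> 3 \<and> distinct C \<and> set C \<subseteq> V
     \<and> (\<forall>i. Suc i < length C \<longrightarrow> E (C ! i) (C ! Suc i))
     \<and> E (last C) (hd C)"

text \<open>C has a (u,v)-shortcut for u = C!i, v = C!j (i \<noteq> j): a (u,v)-path avoiding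
  V(C) - {u,v} that is strictly shorter than both (u,v)-arcs of C, whose lengths
  are |i-j| and length C - |i-j|.\<close>
definition has_shortcut :: "'a set \<Rightarrow> ('a \<Rightarrow> 'a \<Rightarrow> bool) \<Rightarrow> 'a list \<Rightarrow> bool" where
  "has_shortcut V E C \<longleftrightarrow>
     (\<exists>i j P. i < length C \<and> j < length C \<and> i \<noteq> j \<and>
        is_path V E P \<and> hd P = C ! i \<and> last P = C ! j \<and>
        set P \<inter> set C \<subseteq> {C ! i, C ! j} \<and>
        length P - 1 < nat \<bar>int i - int j\<bar> \<and>
        length P - 1 < length C - nat \<bar>int i - int j\<bar>)"

definition step :: "('a \<Rightarrow> 'a \<Rightarrow> bool) \<Rightarrow> 'a \<Rightarrow> 'a \<Rightarrow> bool" where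
  "step E x x' \<longleftrightarrow> x' = x \<or> E x x'"

text \<open>Facilitator's target: R and J have met (game already won), or they both lie
  on a cycle of length < L.\<close>
definition shorter_goal :: "'a set \<Rightarrow> ('a \<Rightarrow> 'a \<Rightarrow> bool) \<Rightarrow> nat \<Rightarrow> 'a \<Rightarrow> 'a \<Rightarrow> bool" where
  "shorter_goal V E L r j \<longleftrightarrow> r = j \<or>
     (\<exists>C'. is_cycle V E C' \<and> r \<in> set C' \<and> j \<in> set C' \<and> length C' < L)"

text \<open>force V E goal n r j d: in the position with R at r, J at j, the single Divider
  agent at d and Facilitator to move, Facilitator has a strategy guaranteeing that
  goal holds for the positions of R, J after at most n of his moves (goal checked
  now and after each of his moves; Divider moves do not change R, J).\<close>
fun force :: "('a \<Rightarrow> 'a \<Rightarrow> bool) \<Rightarrow> ('a \<Rightarrow> 'a \<Rightarrow> bool) \<Rightarrow> nat \<Rightarrow> 'a \<Rightarrow> 'a \<Rightarrow> 'a \<Rightarrow> bool" where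
  "force E goal 0 r j d = goal r j"
| "force E goal (Suc n) r j d = (goal r j \<or>
     (\<exists>r' j'. step E r r' \<and> step E j j' \<and> r' \<noteq> d \<and> j' \<noteq> d \<and>
        (\<forall>d'. step E d d' \<and> d' \<noteq> r' \<and> d' \<noteq> j' \<longrightarrow> force E goal n r' j' d')))"

end

theory Submission
  imports Defs
begin

lemma path_iff: "is_path V E P \<longleftrightarrow> P \<noteq> [] \<and> distinct P \<and> set P \<subseteq> V \<and> successively E P"
  unfolding is_path_def successively_conv_nth by blast

lemma cycle_iff: "is_cycle V E C \<longleftrightarrow> length C \<ge> 3 \<and> distinct C \<and> set C \<subseteq> V \<and> successively E C \<and> E (last C) (hd C)"
  unfolding is_cycle_def successively_conv_nth by blast

lemma succ_take: "successively R xs \<Longrightarrow> successively R (take k xs)"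
  unfolding successively_conv_nth by auto

lemma succ_drop: "successively R xs \<Longrightarrow> successively R (drop k xs)"
  unfolding successively_conv_nth by auto

lemma in_drop_take: "x \<in> set (drop a (take b xs)) \<longleftrightarrow> (\<exists>k. a \<le> k \<and> k < b \<and> k < length xs \<and> x = xs ! k)"
proof
  assume "x \<in> set (drop a (take b xs))"
  then obtain t where t: "t < length (drop a (take b xs))" and x: "x = drop a (take b xs) ! t" by (auto simp: in_set_conv_nth)
  have al: "a \<le> length (take b xs)" using t by auto
  have "x = xs ! (a + t)" using t x nth_drop[OF al, of t] by simp
  then show "\<exists>k. a \<le> k \<and> k < b \<and> k < length xs \<and> x = xs ! k"
    using t by (intro exI[of _ "a + t"]) auto
next
  assume "\<exists>k. a \<le> k \<and> k < b \<and> k < length xs \<and> x = xs ! k"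
  then obtain k where k: "a \<le> k" "k < b" "k < length xs" "x = xs ! k" by blast
  then have "drop a (take b xs) ! (k - a) = x" "k - a < length (drop a (take b xs))" by auto
  then show "x \<in> set (drop a (take b xs))" by (metis nth_mem)
qed

lemma in_drop: "x \<in> set (drop a xs) \<longleftrightarrow> (\<exists>k. a \<le> k \<and> k < length xs \<and> x = xs ! k)"
  using in_drop_take[of x a "length xs" xs] by auto

lemma in_take: "x \<in> set (take b xs) \<longleftrightarrow> (\<exists>k. k < b \<and> k < length xs \<and> x = xs ! k)"
  using in_drop_take[of x 0 b xs] by auto

lemma glue:
  assumes P: "is_path V E P" and lP: "length P \<ge> 2" and Q: "Q \<noteq> []" "distinct Q" "set Q \<subseteq> V" "successively E Q"
    and hdQ: "hd Q = last P" and cl: "E (last Q) (hd P)"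
    and dis: "set (butlast P) \<inter> set Q = {}" and len: "length P + length Q \<ge> 4"
  shows "is_cycle V E (butlast P @ Q)"
proof -
  have Pp: "P \<noteq> []" "distinct P" "set P \<subseteq> V" "successively E P" using P by (auto simp: path_iff)
  have bne: "butlast P \<noteq> []" using lP by (cases P) auto
  have eq: "P = butlast P @ [last P]" using Pp by simp
  have s1: "successively E (butlast P)" "E (last (butlast P)) (last P)"
    using Pp(4) bne by (subst (asm) eq, auto simp: successively_append_iff)+
  have "successively E (butlast P @ Q)" using s1 Q hdQ bne by (auto simp: successively_append_iff)
  moreover have "distinct (butlast P @ Q)" using Pp Q dis distinct_butlast by auto
  moreover have "set (butlast P @ Q) \<subseteq> V" using Pp Q by (auto dest: in_set_butlastD)
  moreover have "length (butlast P @ Q) \<ge> 3" using len by auto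
  moreover have "last (butlast P @ Q) = last Q" "hd (butlast P @ Q) = hd P"
    using Q bne by (auto simp: hd_append) (metis eq hd_append2 bne)
  ultimately show ?thesis using cl by (auto simp: cycle_iff)
qed


locale sc_setup =
  fixes V E C P i j
  assumes cyc: "is_cycle V E C" and sym: "\<And>x y. E x y \<Longrightarrow> E y x"
    and P: "is_path V E P" and ij: "i < j" "j < length C"
    and hdP: "hd P = C ! i" and lastP: "last P = C ! j"
    and disj: "set P \<inter> set C \<subseteq> {C ! i, C ! j}"
    and l1: "length P - 1 < j - i" and l2: "length P - 1 < length C - (j - i)"
begin

lemma basics:
  shows "distinct C" "successively E C" "E (last C) (hd C)" "set C \<subseteq> V" "length C \<ge> 3"
    and "length P \<ge> 2" "C ! i \<in> set (butlast P)" "set (butlast P) \<inter> set C \<subseteq> {C ! i}"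
proof -
  show dC: "distinct C" "successively E C" "E (last C) (hd C)" "set C \<subseteq> V" "length C \<ge> 3"
    using cyc by (auto simp: cycle_iff)
  have Pp: "P \<noteq> []" "distinct P" using P by (auto simp: path_iff)
  have "C ! i \<noteq> C ! j" using dC(1) ij by (simp add: nth_eq_iff_index_eq)
  then show lP: "length P \<ge> 2" using hdP lastP Pp
    by (cases P; cases "tl P") auto
  have eq: "P = butlast P @ [last P]" using Pp by simp
  have bne: "butlast P \<noteq> []" using lP by (cases P) auto
  show "C ! i \<in> set (butlast P)" using hdP bne
    by (metis eq hd_append2 hd_in_set)
  have "last P \<notin> set (butlast P)" using Pp(2) by (subst (asm) eq) auto
  then show "set (butlast P) \<inter> set C \<subseteq> {C ! i}" using disj lastP
    by (auto dest: in_set_butlastD)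
qed

lemma cycle1: "\<exists>C'. is_cycle V E C' \<and> length C' < length C \<and> (\<forall>k. i \<le> k \<longrightarrow> k \<le> j \<longrightarrow> C ! k \<in> set C')"
proof -
  note b = basics
  define L where "L = drop (Suc i) (take (Suc j) C)"
  define Q where "Q = rev L"
  have lenL: "length L = j - i" using ij by (simp add: L_def)
  have nthL: "\<And>t. t < j - i \<Longrightarrow> L ! t = C ! (Suc i + t)"
    using ij by (simp add: L_def)
  have Lne: "L \<noteq> []" using lenL ij by auto
  have setL: "\<And>x. x \<in> set L \<longleftrightarrow> (\<exists>k. Suc i \<le> k \<and> k < Suc j \<and> k < length C \<and> x = C ! k)"
    unfolding L_def by (rule in_drop_take)
  have "last L = C ! j" using Lne lenL nthL[of "j-i-1"] ij by (simp add: last_conv_nth)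
  then have hdQ: "hd Q = last P" using lastP by (simp add: Q_def hd_rev)
  have lastQ: "last Q = C ! Suc i" unfolding Q_def using Lne lenL nthL[of 0] ij
    by (simp add: last_rev hd_conv_nth)
  have "E (C ! i) (C ! Suc i)" using successively_nth[OF b(2), of i] ij by auto
  then have cl: "E (last Q) (hd P)" using lastQ hdP sym by auto
  have sQ: "successively E Q" unfolding Q_def L_def using b(2)
    by (auto intro!: succ_drop succ_take intro: successively_mono sym)
  have dQ: "distinct Q" unfolding Q_def L_def using b(1) by auto
  have vQ: "set Q \<subseteq> V" unfolding Q_def L_def using b(4) by (auto dest: in_set_dropD in_set_takeD)
  have ni: "C ! i \<notin> set Q" unfolding Q_def set_rev setL using b(1) ij
    by (auto simp: nth_eq_iff_index_eq)
  have dis: "set (butlast P) \<inter> set Q = {}"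
  proof -
    have "set Q \<subseteq> set C" unfolding Q_def L_def by (auto dest: in_set_dropD in_set_takeD)
    then show ?thesis using b(8) ni by blast
  qed
  have Qne: "Q \<noteq> []" using Lne by (simp add: Q_def)
  have cy: "is_cycle V E (butlast P @ Q)"
    using glue[OF P b(6) Qne dQ vQ sQ hdQ cl dis] b(6) lenL l1 by (simp add: Q_def)
  have len: "length (butlast P @ Q) < length C" using lenL l2 ij by (simp add: Q_def)
  have mem: "\<forall>k. i \<le> k \<longrightarrow> k \<le> j \<longrightarrow> C ! k \<in> set (butlast P @ Q)"
  proof (intro allI impI)
    fix k assume "i \<le> k" "k \<le> j"
    note kk = this
    show "C ! k \<in> set (butlast P @ Q)"
    proof (cases "k = i")
      case True then show ?thesis using b(7) by simp
    next
      case False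
      have "C ! k \<in> set L" unfolding setL using kk False ij by (intro exI[of _ k]) auto
      then show ?thesis by (simp add: Q_def)
    qed
  qed
  show ?thesis using cy len mem by blast
qed

lemma cycle2: "\<exists>C'. is_cycle V E C' \<and> length C' < length C \<and> (\<forall>k. k < length C \<longrightarrow> (k \<le> i \<or> j \<le> k) \<longrightarrow> C ! k \<in> set C')"
proof -
  note b = basics
  define Q where "Q = drop j C @ take i C"
  have setD: "\<And>x. x \<in> set (drop j C) \<longleftrightarrow> (\<exists>k. j \<le> k \<and> k < length C \<and> x = C ! k)" by (rule in_drop)
  have setT: "\<And>x. x \<in> set (take i C) \<longleftrightarrow> (\<exists>k. k < i \<and> k < length C \<and> x = C ! k)" by (rule in_take)
  have Qne: "Q \<noteq> []" using ij by (simp add: Q_def)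
  have hdQ: "hd Q = last P" using ij lastP by (simp add: Q_def hd_drop_conv_nth)
  have cl: "E (last Q) (hd P)"
  proof (cases "i = 0")
    case True
    then have "last Q = last C" using ij by (simp add: Q_def)
    moreover have "C \<noteq> []" using ij by auto
    then have "hd P = hd C" using hdP True by (simp add: hd_conv_nth)
    ultimately show ?thesis using b(3) by simp
  next
    case False
    then have tne: "take i C \<noteq> []" using ij by auto
    then have "last Q = last (take i C)" by (simp add: Q_def)
    also have "\<dots> = C ! (i - 1)" using tne False ij by (simp add: last_conv_nth)
    finally have "last Q = C ! (i - 1)" .
    moreover have "E (C ! (i - 1)) (C ! Suc (i - 1))" using successively_nth[OF b(2), of "i - 1"] ij False by auto
    ultimately show ?thesis using hdP False by simp
  qed
  have sQ: "successively E Q"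
  proof -
    have "take i C = [] \<or> E (last (drop j C)) (hd (take i C))"
      using b(3) ij by (cases "i = 0") auto
    then show ?thesis unfolding Q_def using b(2)
      by (auto simp: successively_append_iff intro!: succ_drop succ_take)
  qed
  have dQ: "distinct Q" unfolding Q_def using b(1) ij
    by (auto simp: setD setT nth_eq_iff_index_eq)
  have vQ: "set Q \<subseteq> V" unfolding Q_def using b(4) by (auto dest: in_set_dropD in_set_takeD)
  have ni: "C ! i \<notin> set Q" unfolding Q_def set_append using b(1) ij
    by (auto simp: setD setT nth_eq_iff_index_eq)
  have dis: "set (butlast P) \<inter> set Q = {}"
  proof -
    have "set Q \<subseteq> set C" unfolding Q_def by (auto dest: in_set_dropD in_set_takeD)
    then show ?thesis using b(8) ni by blast
  qed
  have lenQ: "length Q = length C - j + i" using ij by (simp add: Q_def)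
  have cy: "is_cycle V E (butlast P @ Q)"
    using glue[OF P b(6) Qne dQ vQ sQ hdQ cl dis] b(6) lenQ l2 ij by simp
  have len: "length (butlast P @ Q) < length C" using lenQ l1 ij by simp
  have mem: "\<forall>k. k < length C \<longrightarrow> (k \<le> i \<or> j \<le> k) \<longrightarrow> C ! k \<in> set (butlast P @ Q)"
  proof (intro allI impI)
    fix k assume "k < length C" "k \<le> i \<or> j \<le> k"
    note kk = this
    show "C ! k \<in> set (butlast P @ Q)"
    proof (cases "k = i")
      case True then show ?thesis using b(7) by simp
    next
      case False
      have "C ! k \<in> set (drop j C) \<or> C ! k \<in> set (take i C)"
      proof (cases "j \<le> k")
        case True then show ?thesis unfolding setD using kk by blast
      next
        case False
        then have "k < i" using kk \<open>k \<noteq> i\<close> by auto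
        then show ?thesis unfolding setT using kk by blast
      qed
      then show ?thesis by (auto simp: Q_def)
    qed
  qed
  show ?thesis using cy len mem by blast
qed

end


definition good :: "nat \<Rightarrow> nat \<Rightarrow> nat \<Rightarrow> nat \<Rightarrow> bool" where
  "good i j p q \<longleftrightarrow> (i \<le> p \<and> p \<le> j \<and> i \<le> q \<and> q \<le> j) \<or> ((j \<le> p \<or> p \<le> i) \<and> (j \<le> q \<or> q \<le> i))"

definition sc :: "nat \<Rightarrow> nat \<Rightarrow> nat" where
  "sc n k = (if Suc k = n then 0 else Suc k)"

definition dB :: "nat \<Rightarrow> nat \<Rightarrow> nat \<Rightarrow> nat" where
  "dB n i q = (if q < i then i - q else n - q + i)"

definition Phi :: "nat \<Rightarrow> nat \<Rightarrow> nat \<Rightarrow> nat \<Rightarrow> nat \<Rightarrow> nat" where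
  "Phi n i j p q = (if i < p \<and> p < j then (j - p) + dB n i q else dB n i p + (j - q))"

lemma arith1:
  assumes "i < j" "j < n" "p < n" "q < n" "\<not> good i j p q"
  shows "good i j (sc n p) q \<or> Phi n i j (sc n p) q < Phi n i j p q"
  using assms unfolding good_def sc_def Phi_def dB_def by (auto split: if_splits)

lemma arith2:
  assumes "i < j" "j < n" "p < n" "q < n" "\<not> good i j p q"
  shows "good i j p (sc n q) \<or> Phi n i j p (sc n q) < Phi n i j p q"
  using assms unfolding good_def sc_def Phi_def dB_def by (auto split: if_splits)

lemma arith3:
  assumes "i < j" "j < n" "p < n" "q < n" "\<not> good i j p q"
  shows "Phi n i j p q \<le> n"
  using assms unfolding good_def Phi_def dB_def by (auto split: if_splits)

lemma good_refl: "good i j p p"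
  unfolding good_def by auto

lemma game:
  assumes cyc: "is_cycle V E C" and ij: "i < j" "j < length C"
    and gA: "\<And>p q. p < length C \<Longrightarrow> q < length C \<Longrightarrow> good i j p q \<Longrightarrow> goal (C ! p) (C ! q)"
  shows "\<And>p q d. p < length C \<Longrightarrow> q < length C \<Longrightarrow> d \<noteq> C ! p \<Longrightarrow> d \<noteq> C ! q \<Longrightarrow>
     good i j p q \<or> Phi (length C) i j p q \<le> m \<Longrightarrow> force E goal m (C ! p) (C ! q) d"
proof (induction m)
  case (0 p q d)
  then have "good i j p q" using ij unfolding good_def Phi_def dB_def by (auto split: if_splits)
  then show ?case using gA 0 by simp
next
  case (Suc m p q d)
  let ?n = "length C"
  have dC: "distinct C" and sC: "successively E C" and cl: "E (last C) (hd C)"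
    using cyc by (auto simp: cycle_iff)
  have edge: "\<And>k. k < ?n \<Longrightarrow> E (C ! k) (C ! sc ?n k)"
  proof -
    fix k assume k: "k < ?n"
    show "E (C ! k) (C ! sc ?n k)"
    proof (cases "Suc k = ?n")
      case True
      have ne: "C \<noteq> []" using k by auto
      have "k = length C - 1" using True by simp
      then have "C ! k = last C" using last_conv_nth[OF ne] by simp
      moreover have "C ! 0 = hd C" using hd_conv_nth[OF ne] by simp
      ultimately have "C ! k = last C" "C ! 0 = hd C" by auto
      then show ?thesis using cl True by (simp add: sc_def)
    next
      case False
      then show ?thesis using successively_nth[OF sC, of k] k by (simp add: sc_def)
    qed
  qed
  have scl: "\<And>k. k < ?n \<Longrightarrow> sc ?n k < ?n" unfolding sc_def by auto
  show ?case
  proof (cases "good i j p q")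
    case True
    then show ?thesis using gA Suc.prems by simp
  next
    case ng: False
    then have ph: "Phi ?n i j p q \<le> Suc m" using Suc.prems by simp
    have pq: "p \<noteq> q" using ng good_refl by metis
    have "sc ?n p \<noteq> sc ?n q" using pq Suc.prems(1,2) unfolding sc_def by (auto split: if_splits)
    then have neq: "C ! sc ?n p \<noteq> C ! sc ?n q"
      using dC scl Suc.prems(1,2) by (simp add: nth_eq_iff_index_eq)
    show ?thesis
    proof (cases "d = C ! sc ?n p")
      case False
      have "\<forall>d'. step E d d' \<and> d' \<noteq> C ! sc ?n p \<and> d' \<noteq> C ! q \<longrightarrow> force E goal m (C ! sc ?n p) (C ! q) d'"
      proof (intro allI impI)
        fix d' assume "step E d d' \<and> d' \<noteq> C ! sc ?n p \<and> d' \<noteq> C ! q"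
        moreover have "good i j (sc ?n p) q \<or> Phi ?n i j (sc ?n p) q \<le> m"
          using arith1[OF ij Suc.prems(1,2) ng] ph by auto
        ultimately show "force E goal m (C ! sc ?n p) (C ! q) d'"
          using Suc.IH[of "sc ?n p" q d'] scl Suc.prems by auto
      qed
      moreover have "step E (C ! p) (C ! sc ?n p)" "step E (C ! q) (C ! q)"
        using edge Suc.prems by (auto simp: step_def)
      ultimately show ?thesis using False Suc.prems by auto
    next
      case True
      then have F: "d \<noteq> C ! sc ?n q" using neq by simp
      have "\<forall>d'. step E d d' \<and> d' \<noteq> C ! p \<and> d' \<noteq> C ! sc ?n q \<longrightarrow> force E goal m (C ! p) (C ! sc ?n q) d'"
      proof (intro allI impI)
        fix d' assume "step E d d' \<and> d' \<noteq> C ! p \<and> d' \<noteq> C ! sc ?n q"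
        moreover have "good i j p (sc ?n q) \<or> Phi ?n i j p (sc ?n q) \<le> m"
          using arith2[OF ij Suc.prems(1,2) ng] ph by auto
        ultimately show "force E goal m (C ! p) (C ! sc ?n q) d'"
          using Suc.IH[of p "sc ?n q" d'] scl Suc.prems by auto
      qed
      moreover have "step E (C ! p) (C ! p)" "step E (C ! q) (C ! sc ?n q)"
        using edge Suc.prems by (auto simp: step_def)
      ultimately show ?thesis using F Suc.prems by auto
    qed
  qed
qed


lemma main_ij:
  assumes cyc: "is_cycle V E C" and sym: "\<And>x y. E x y \<Longrightarrow> E y x"
    and P: "is_path V E P" and ij: "i < j" "j < length C"
    and hdP: "hd P = C ! i" and lastP: "last P = C ! j"
    and disj: "set P \<inter> set C \<subseteq> {C ! i, C ! j}"
    and l1: "length P - 1 < j - i" and l2: "length P - 1 < length C - (j - i)"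
    and r: "r \<in> set C" and s: "s \<in> set C" and d: "d \<noteq> r" "d \<noteq> s"
  shows "force E (shorter_goal V E (length C)) (length C) r s d"
proof -
  interpret sc_setup V E C P i j
    using assms by unfold_locales auto
  have gA: "\<And>p q. p < length C \<Longrightarrow> q < length C \<Longrightarrow> good i j p q \<Longrightarrow> shorter_goal V E (length C) (C ! p) (C ! q)"
  proof -
    fix p q assume pq: "p < length C" "q < length C" "good i j p q"
    show "shorter_goal V E (length C) (C ! p) (C ! q)"
    proof (cases "i \<le> p \<and> p \<le> j \<and> i \<le> q \<and> q \<le> j")
      case True
      then show ?thesis using cycle1 unfolding shorter_goal_def by blast
    next
      case False
      then have "(j \<le> p \<or> p \<le> i) \<and> (j \<le> q \<or> q \<le> i)" using pq(3) unfolding good_def by blast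
      then show ?thesis using cycle2 pq unfolding shorter_goal_def by blast
    qed
  qed
  obtain p where p: "p < length C" "r = C ! p" using r by (auto simp: in_set_conv_nth)
  obtain q where q: "q < length C" "s = C ! q" using s by (auto simp: in_set_conv_nth)
  have "good i j p q \<or> Phi (length C) i j p q \<le> length C" using arith3[OF ij p(1) q(1)] by auto
  then show ?thesis using game[where goal="shorter_goal V E (length C)", OF cyc ij gA p(1) q(1)] p q d by auto
qed

theorem claim1:
  fixes V :: "'a set" and E :: "'a \<Rightarrow> 'a \<Rightarrow> bool" and C :: "'a list" and r j d :: 'a
  assumes "simple_graph V E" and "connected_graph V E"
    and "is_cycle V E C" and "has_shortcut V E C"
    and "r \<in> set C" and "j \<in> set C"
    and "d \<in> V" and "d \<noteq> r" and "d \<noteq> j"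
  shows "force E (shorter_goal V E (length C)) (length C) r j d"
proof -
  have sym: "\<And>x y. E x y \<Longrightarrow> E y x" using assms(1) unfolding simple_graph_def by blast
  obtain a b P where ab: "a < length C" "b < length C" "a \<noteq> b" and P: "is_path V E P"
    and hd: "hd P = C ! a" and lst: "last P = C ! b" and dj: "set P \<inter> set C \<subseteq> {C ! a, C ! b}"
    and la: "length P - 1 < nat \<bar>int a - int b\<bar>" and lb: "length P - 1 < length C - nat \<bar>int a - int b\<bar>"
    using assms(4) unfolding has_shortcut_def by blast
  show ?thesis
  proof (cases "a < b")
    case True
    have "nat \<bar>int a - int b\<bar> = b - a" using True by simp
    then show ?thesis
      using main_ij[OF assms(3) sym P True ab(2) hd lst dj _ _ assms(5,6,8,9)] la lb by simp
  next
    case False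
    then have ba: "b < a" using ab(3) by simp
    have e: "nat \<bar>int a - int b\<bar> = a - b" using ba by simp
    have P': "is_path V E (rev P)" using P sym
      by (auto simp: path_iff intro: successively_mono)
    have "P \<noteq> []" using P by (simp add: path_iff)
    then have "hd (rev P) = C ! b" "last (rev P) = C ! a"
      using hd lst by (auto simp: hd_rev last_rev)
    moreover have "set (rev P) \<inter> set C \<subseteq> {C ! b, C ! a}" using dj by auto
    ultimately show ?thesis
      using main_ij[OF assms(3) sym P' ba ab(1) _ _ _ _ _ assms(5,6,8,9)] la lb e by simp
  qed
qed

end
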